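(* Let $\lambda=(\lambda_1,\dots,\lambda_l)$ and $\mu=(\mu_1,\dots,\mu_m)$ be decompositions of $n$ (all parts positive) with $\mu_m\le\lambda_l$. Then $$|P_{\lambda|\mu}|=2^{\mu_m(\lambda_l-\mu_m)}\,|\mathrm{GL}_{\mu_m}(\mathbb{F}_2)|\cdot|P_{\widetilde\lambda|\widetilde\mu}|,$$ where $\widetilde\lambda=(\lambda_1,\dots,\lambda_{l-1},\lambda_l-\mu_m)$ and $\widetilde\mu=(\mu_1,\dots,\mu_{m-1})$, both decompositions of $n-\mu_m$.
   Context: For a decomposition $\lambda=(\lambda_1,\dots,\lambda_l)$ of $N$ (zero parts are omitted; the empty decomposition is the decomposition of $0$, with $\mathrm{GL}_0$ and all associated groups trivial), $P_\lambda\le\mathrm{GL}_N(\mathbb{F}_2)$ is the standard parabolic subgroup of invertible block upper triangular matrices with diagonal blocks of sizes $\lambda_1,\dots,\lambda_l$ in this order. $P_\mu^t$ is the group of transposes of elements of $P_\mu$, and $P_{\lambda|\mu}=P_\lambda\cap P_\mu^t$ for decompositions $\lambda,\mu$ of the same $N$. *)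

theory Defs
  imports "Jordan_Normal_Form.Matrix" "HOL-Library.Z2"
begin

definition is_decomp :: "nat \<Rightarrow> nat list \<Rightarrow> bool" where
  "is_decomp n ds \<longleftrightarrow> sum_list ds = n \<and> (\<forall>x\<in>set ds. 0 < x)"

definition GL2 :: "nat \<Rightarrow> bit mat set" where
  "GL2 N = {A \<in> carrier_mat N N. invertible_mat A}"

text \<open>Index (0-based) of the diagonal block containing row/column i.\<close>
definition blk :: "nat list \<Rightarrow> nat \<Rightarrow> nat" where
  "blk ds i = card {k. k < length ds \<and> sum_list (take (Suc k) ds) \<le> i}"

definition parabolic :: "nat list \<Rightarrow> bit mat set" where
  "parabolic ds = {A \<in> GL2 (sum_list ds).
     \<forall>i < sum_list ds. \<forall>j < sum_list ds. blk ds j < blk ds i \<longrightarrow> A $$ (i, j) = 0}"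

definition parabolic_t :: "nat list \<Rightarrow> bit mat set" where
  "parabolic_t ds = transpose_mat ` parabolic ds"

definition parabolic_mix :: "nat list \<Rightarrow> nat list \<Rightarrow> bit mat set" where
  "parabolic_mix la mu = parabolic la \<inter> parabolic_t mu"

end

theory Submission imports Defs "Jordan_Normal_Form.Determinant" "HOL-Library.FuncSet" begin

lemma card_bit: "card (UNIV::bit set) = 2"
proof -
  have "UNIV = {0::bit, 1}" by (auto intro: bit.exhaust)
  show ?thesis by (subst \<open>UNIV = _\<close>) simp
qed

lemma inv_iff_det:
  assumes A: "(A :: 'a :: field mat) \<in> carrier_mat n n"
  shows "invertible_mat A \<longleftrightarrow> det A \<noteq> 0"
proof
  assume "invertible_mat A"
  then obtain B where AB: "A * B = 1\<^sub>m n" and BA: "B * A = 1\<^sub>m (dim_row B)"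
    using A unfolding invertible_mat_def inverts_mat_def by auto
  have "dim_col B = n" using arg_cong[OF AB, of dim_col] by simp
  moreover have "dim_row B = n" using arg_cong[OF BA, of dim_col] A by simp
  ultimately have B: "B \<in> carrier_mat n n" by auto
  have "det A * det B = 1" using arg_cong[OF AB, of det] det_mult[OF A B] by simp
  then show "det A \<noteq> 0" by auto
next
  assume "det A \<noteq> 0"
  from det_non_zero_imp_unit[OF A this, of "()"]
  obtain B where B: "B \<in> carrier_mat n n" and "B * A = 1\<^sub>m n" "A * B = 1\<^sub>m n"
    unfolding Units_def ring_mat_def by auto
  then show "invertible_mat A" using A unfolding invertible_mat_def inverts_mat_def square_mat.simps
    by (metis carrier_matD(1) carrier_matD(2))
qed

lemma sum_take_le: "sum_list (take k (xs::nat list)) \<le> sum_list xs"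
  by (metis append_take_drop_id le_add1 sum_list_append)

lemma blk_append:
  assumes "i < sum_list xs" shows "blk (xs @ ys) i = blk xs i"
proof -
  have "{k. k < length (xs @ ys) \<and> sum_list (take (Suc k) (xs @ ys)) \<le> i}
      = {k. k < length xs \<and> sum_list (take (Suc k) xs) \<le> i}" (is "?L = ?R")
  proof (intro equalityI subsetI)
    fix k assume "k \<in> ?L"
    then have k: "k < length (xs@ys)" "sum_list (take (Suc k) xs) + sum_list (take (Suc k - length xs) ys) \<le> i"
      by auto
    show "k \<in> ?R"
    proof (cases "k < length xs")
      case True then show ?thesis using k by auto
    next
      case False then have "take (Suc k) xs = xs" by simp
      then show ?thesis using k assms by auto
    qed
  next
    fix k assume "k \<in> ?R" then show "k \<in> ?L" by auto
  qed
  then show ?thesis unfolding blk_def by simp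
qed

lemma blk_lt:
  assumes "i < sum_list xs" shows "blk xs i < length xs"
proof -
  have ne: "xs \<noteq> []" using assms by auto
  have "{k. k < length xs \<and> sum_list (take (Suc k) xs) \<le> i} \<subseteq> {..<length xs - 1}"
  proof
    fix k assume k: "k \<in> {k. k < length xs \<and> sum_list (take (Suc k) xs) \<le> i}"
    have "k \<noteq> length xs - 1"
    proof
      assume "k = length xs - 1"
      then have "Suc k = length xs" using ne by auto
      then show False using k assms by auto
    qed
    then show "k \<in> {..<length xs - 1}" using k by auto
  qed
  from card_mono[OF _ this] have "blk xs i \<le> length xs - 1" unfolding blk_def by simp
  then show ?thesis using ne by (cases xs) auto
qed

lemma blk_last:
  assumes "sum_list xs \<le> i" "i < sum_list xs + x"
  shows "blk (xs @ [x]) i = length xs"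
proof -
  have "{k. k < length (xs @ [x]) \<and> sum_list (take (Suc k) (xs @ [x])) \<le> i} = {..<length xs}"
  proof (intro equalityI subsetI)
    fix k assume k: "k \<in> {k. k < length (xs @ [x]) \<and> sum_list (take (Suc k) (xs @ [x])) \<le> i}"
    have "k \<noteq> length xs"
    proof
      assume "k = length xs"
      then show False using k assms by auto
    qed
    then show "k \<in> {..<length xs}" using k by auto
  next
    fix k assume "k \<in> {..<length xs}"
    then show "k \<in> {k. k < length (xs @ [x]) \<and> sum_list (take (Suc k) (xs @ [x])) \<le> i}"
      using sum_take_le[of "Suc k" xs] assms by auto
  qed
  then show ?thesis unfolding blk_def by simp
qed

lemma parabolic_iff:
  "A \<in> parabolic ds \<longleftrightarrow> A \<in> carrier_mat (sum_list ds) (sum_list ds) \<and> det A \<noteq> 0 \<and>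
     (\<forall>i < sum_list ds. \<forall>j < sum_list ds. blk ds j < blk ds i \<longrightarrow> A $$ (i, j) = 0)"
  unfolding parabolic_def GL2_def using inv_iff_det by blast

lemma parabolic_t_iff:
  "A \<in> parabolic_t ds \<longleftrightarrow> (A \<in> carrier_mat (sum_list ds) (sum_list ds) \<and> det A \<noteq> 0 \<and>
     (\<forall>i < sum_list ds. \<forall>j < sum_list ds. blk ds i < blk ds j \<longrightarrow> A $$ (i, j) = 0))" (is "_ \<longleftrightarrow> ?R")
proof -
  have "A \<in> parabolic_t ds \<longleftrightarrow> transpose_mat A \<in> parabolic ds"
    unfolding parabolic_t_def
    by (metis image_eqI transpose_transpose imageE)
  also have "\<dots> \<longleftrightarrow> ?R"
  proof -
    let ?s = "sum_list ds"
    have "transpose_mat A \<in> parabolic ds \<longleftrightarrow> A \<in> carrier_mat ?s ?s \<and> det A \<noteq> 0 \<and>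
     (\<forall>i < ?s. \<forall>j < ?s. blk ds j < blk ds i \<longrightarrow> transpose_mat A $$ (i, j) = 0)"
      unfolding parabolic_iff transpose_carrier_mat by (metis det_transpose)
    also have "\<dots> \<longleftrightarrow> A \<in> carrier_mat ?s ?s \<and> det A \<noteq> 0 \<and>
     (\<forall>i < ?s. \<forall>j < ?s. blk ds j < blk ds i \<longrightarrow> A $$ (j, i) = 0)"
      by (auto simp: index_transpose_mat)
    also have "\<dots> \<longleftrightarrow> ?R" by blast
    finally show ?thesis by simp
  qed
  finally show ?thesis by simp
qed

lemma mix_iff:
  assumes "sum_list la = N" "sum_list mu = N"
  shows "A \<in> parabolic_mix la mu \<longleftrightarrow> A \<in> carrier_mat N N \<and> det A \<noteq> 0 \<and>
     (\<forall>i < N. \<forall>j < N. blk la j < blk la i \<longrightarrow> A $$ (i, j) = 0) \<and>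
     (\<forall>i < N. \<forall>j < N. blk mu i < blk mu j \<longrightarrow> A $$ (i, j) = 0)"
  unfolding parabolic_mix_def Int_iff parabolic_iff parabolic_t_iff using assms by auto

lemma card_Cs:
  assumes "p \<le> k"
  shows "card {C \<in> carrier_mat a k. \<forall>i<a. \<forall>j<k. j < p \<longrightarrow> C $$ (i, j) = (0::bit)} = 2 ^ (a * (k - p))"
proof -
  let ?D = "{..<a} \<times> {p..<k}"
  let ?F = "PiE ?D (\<lambda>_. UNIV :: bit set)"
  define g where "g f = mat a k (\<lambda>(i,j). if p \<le> j then f (i,j) else (0::bit))" for f :: "nat \<times> nat \<Rightarrow> bit"
  have inj: "inj_on g ?F"
  proof (rule inj_onI)
    fix f f' assume f: "f \<in> ?F" and f': "f' \<in> ?F" and eq: "g f = g f'"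
    show "f = f'"
    proof (rule PiE_ext[OF f f'])
      fix x assume "x \<in> ?D"
      then obtain i j where x: "x = (i,j)" "i < a" "p \<le> j" "j < k" by auto
      have "g f $$ (i,j) = g f' $$ (i,j)" using eq by simp
      then show "f x = f' x" using x unfolding g_def by simp
    qed
  qed
  have img: "g ` ?F = {C \<in> carrier_mat a k. \<forall>i<a. \<forall>j<k. j < p \<longrightarrow> C $$ (i, j) = (0::bit)}"
  proof (intro equalityI subsetI)
    fix C assume "C \<in> g ` ?F"
    then show "C \<in> {C \<in> carrier_mat a k. \<forall>i<a. \<forall>j<k. j < p \<longrightarrow> C $$ (i, j) = (0::bit)}"
      unfolding g_def by auto
  next
    fix C assume C: "C \<in> {C \<in> carrier_mat a k. \<forall>i<a. \<forall>j<k. j < p \<longrightarrow> C $$ (i, j) = (0::bit)}"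
    let ?f = "restrict (\<lambda>x. C $$ x) ?D"
    have "?f \<in> ?F" by auto
    moreover have "g ?f = C"
      using C unfolding g_def by (intro eq_matI) auto
    ultimately show "C \<in> g ` ?F" by (metis image_eqI)
  qed
  have "card ?F = 2 ^ (a * (k - p))"
    by (simp add: card_PiE card_bit card_cartesian_product)
  with img card_image[OF inj] show ?thesis by simp
qed

lemma four_entry:
  assumes "B \<in> carrier_mat k k" "C \<in> carrier_mat a k" "D \<in> carrier_mat a a" "i < k + a" "j < k + a"
  shows "four_block_mat B (0\<^sub>m k a) C D $$ (i,j) =
    (if i < k then if j < k then B $$ (i,j) else 0 else if j < k then C $$ (i-k,j) else D $$ (i-k,j-k))"
  using assms by auto

theorem proposition1:
  fixes n :: nat and la mu :: "nat list"
  assumes "is_decomp n la" and "is_decomp n mu"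
    and "la \<noteq> []" and "mu \<noteq> []"
    and "last mu \<le> last la"
  shows "card (parabolic_mix la mu) =
    2 ^ (last mu * (last la - last mu)) * card (GL2 (last mu)) *
    card (parabolic_mix (filter (\<lambda>x. 0 < x) (butlast la @ [last la - last mu])) (butlast mu))"
proof -
  define a where "a = last mu"
  define L where "L = last la"
  define la' where "la' = butlast la"
  define mu' where "mu' = butlast mu"
  define k where "k = n - a"
  define lt where "lt = filter (\<lambda>x. 0 < x) (butlast la @ [last la - last mu])"
  have la_eq: "la = la' @ [L]" using assms(3) unfolding la'_def L_def by simp
  have mu_eq: "mu = mu' @ [a]" using assms(4) unfolding mu'_def a_def by simp
  have sla: "sum_list la = n" and pos: "\<forall>x\<in>set la. 0 < x" using assms(1) unfolding is_decomp_def by auto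
  have smu: "sum_list mu = n" using assms(2) unfolding is_decomp_def by auto
  have "sum_list la' + L = n" using sla la_eq by (metis sum_list_append sum_list_simps(1) sum_list_simps(2) add_0_right)
  then have sla': "sum_list la' = n - L" and Ln: "L \<le> n" by auto
  have "sum_list mu' + a = n" using smu mu_eq by (metis sum_list_append sum_list_simps(1) sum_list_simps(2) add_0_right)
  then have smu': "sum_list mu' = k" and an: "a \<le> n" unfolding k_def by auto
  have aL: "a \<le> L" using assms(5) unfolding a_def L_def .
  have nka: "k + a = n" using an unfolding k_def by simp
  have kge: "n - L \<le> k" using aL Ln unfolding k_def by simp
  have pos': "filter (\<lambda>x. 0 < x) la' = la'"
    using pos unfolding la'_def by (auto intro!: filter_True dest: in_set_butlastD)
  have lt_eq: "lt = la' @ filter (\<lambda>x. 0 < x) [L - a]"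
    unfolding lt_def la'_def[symmetric] L_def[symmetric] a_def[symmetric] using pos' by simp
  have slt: "sum_list lt = k" using lt_eq sla' aL Ln unfolding k_def by auto
  have G1: "blk lt i = blk la i" if "i < k" for i
  proof (cases "i < n - L")
    case True
    then show ?thesis using blk_append[of i la'] sla' lt_eq la_eq by metis
  next
    case False
    then have "0 < L - a" using that unfolding k_def by linarith
    then have "lt = la' @ [L - a]" using lt_eq by simp
    moreover have "blk (la' @ [L - a]) i = length la'"
      by (rule blk_last) (use False that sla' aL Ln in \<open>auto simp: k_def\<close>)
    moreover have "blk (la' @ [L]) i = length la'"
      by (rule blk_last) (use False that sla' aL Ln in \<open>auto simp: k_def\<close>)
    ultimately show ?thesis using la_eq by simp
  qed
  have M1: "blk mu i = blk mu' i" "blk mu' i < length mu'" if "i < k" for i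
    using blk_append[of i mu' "[a]"] blk_lt[of i mu'] that smu' mu_eq by auto
  have M2: "blk mu i = length mu'" if "k \<le> i" "i < n" for i
    using blk_last[of mu' i a] that smu' mu_eq nka by auto
  have L3: "blk la j < length la'" if "j < n - L" for j
    using blk_append[of j la' "[L]"] blk_lt[of j la'] that sla' la_eq by auto
  have L4: "blk la i = length la'" if "n - L \<le> i" "i < n" for i
    using blk_last[of la' i L] that sla' la_eq Ln by auto
  define Cs where "Cs = {C \<in> carrier_mat a k. \<forall>i<a. \<forall>j<k. j < n - L \<longrightarrow> C $$ (i, j) = (0::bit)}"
  define Bs where "Bs = parabolic_mix lt mu'"
  define Ds where "Ds = GL2 a"
  define \<psi> where "\<psi> = (\<lambda>(B,C,D). four_block_mat B (0\<^sub>m k a) C (D::bit mat))"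
  have Bs_iff: "B \<in> Bs \<longleftrightarrow> B \<in> carrier_mat k k \<and> det B \<noteq> 0 \<and>
     (\<forall>i < k. \<forall>j < k. blk lt j < blk lt i \<longrightarrow> B $$ (i, j) = 0) \<and>
     (\<forall>i < k. \<forall>j < k. blk mu' i < blk mu' j \<longrightarrow> B $$ (i, j) = 0)" for B
    unfolding Bs_def by (rule mix_iff[OF slt smu'])
  have Ds_iff: "D \<in> Ds \<longleftrightarrow> D \<in> carrier_mat a a \<and> det D \<noteq> 0" for D
    unfolding Ds_def GL2_def using inv_iff_det by blast
  have A_iff: "A \<in> parabolic_mix la mu \<longleftrightarrow> A \<in> carrier_mat n n \<and> det A \<noteq> 0 \<and>
     (\<forall>i < n. \<forall>j < n. blk la j < blk la i \<longrightarrow> A $$ (i, j) = 0) \<and>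
     (\<forall>i < n. \<forall>j < n. blk mu i < blk mu j \<longrightarrow> A $$ (i, j) = 0)" for A
    by (rule mix_iff[OF sla smu])
  have img: "parabolic_mix la mu = \<psi> ` (Bs \<times> Cs \<times> Ds)"
  proof (intro equalityI subsetI)
    fix A assume A: "A \<in> parabolic_mix la mu"
    define B where "B = mat k k (\<lambda>(i,j). A $$ (i,j))"
    define C where "C = mat a k (\<lambda>(i,j). A $$ (k+i,j))"
    define D where "D = mat a a (\<lambda>(i,j). A $$ (k+i,k+j))"
    have Bc: "B \<in> carrier_mat k k" and Cc: "C \<in> carrier_mat a k" and Dc: "D \<in> carrier_mat a a"
      unfolding B_def C_def D_def by auto
    have Ac: "A \<in> carrier_mat n n" and dA: "det A \<noteq> 0"
      and a1: "\<And>i j. i < n \<Longrightarrow> j < n \<Longrightarrow> blk la j < blk la i \<Longrightarrow> A $$ (i, j) = 0"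
      and a2: "\<And>i j. i < n \<Longrightarrow> j < n \<Longrightarrow> blk mu i < blk mu j \<Longrightarrow> A $$ (i, j) = 0"
      using A unfolding A_iff by blast+
    have AeqP: "A = \<psi> (B, C, D)"
    proof (rule eq_matI)
      show "dim_row A = dim_row (\<psi> (B, C, D))" "dim_col A = dim_col (\<psi> (B, C, D))"
        using Ac Bc Dc nka unfolding \<psi>_def by auto
    next
      fix i j assume ij: "i < dim_row (\<psi> (B, C, D))" "j < dim_col (\<psi> (B, C, D))"
      then have ij': "i < n" "j < n" using Bc Dc nka unfolding \<psi>_def by auto
      have z: "A $$ (i, j) = 0" if "i < k" "\<not> j < k"
        using a2[of i j] M1[of i] M2[of j] that ij' by simp
      show "A $$ (i, j) = \<psi> (B, C, D) $$ (i, j)"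
        unfolding \<psi>_def using four_entry[OF Bc Cc Dc, of i j] ij' nka z
        unfolding B_def C_def D_def by auto
    qed
    have "det A = det B * det D"
      using AeqP det_four_block_mat_upper_right_zero[OF Bc refl Cc Dc] unfolding \<psi>_def by simp
    then have dB: "det B \<noteq> 0" and dD: "det D \<noteq> 0" using dA by auto
    have "B \<in> Bs"
    proof -
      have "B $$ (i, j) = 0" if "i < k" "j < k" "blk lt j < blk lt i" for i j
        using a1[of i j] G1[of i] G1[of j] that nka unfolding B_def by simp
      moreover have "B $$ (i, j) = 0" if "i < k" "j < k" "blk mu' i < blk mu' j" for i j
        using a2[of i j] M1(1)[of i] M1(1)[of j] that nka unfolding B_def by simp
      ultimately show ?thesis using Bs_iff Bc dB by blast
    qed
    moreover have "C \<in> Cs"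
    proof -
      have "C $$ (i, j) = 0" if "i < a" "j < k" "j < n - L" for i j
      proof -
        have "blk la j < blk la (k + i)" using L3[of j] L4[of "k+i"] that kge nka by auto
        then show ?thesis using a1[of "k+i" j] that nka unfolding C_def by simp
      qed
      then show ?thesis using Cc unfolding Cs_def by blast
    qed
    moreover have "D \<in> Ds" using Ds_iff Dc dD by blast
    ultimately show "A \<in> \<psi> ` (Bs \<times> Cs \<times> Ds)" using AeqP by blast
  next
    fix A assume "A \<in> \<psi> ` (Bs \<times> Cs \<times> Ds)"
    then obtain B C D where B: "B \<in> Bs" and C: "C \<in> Cs" and D: "D \<in> Ds" and AE: "A = \<psi> (B, C, D)"
      by auto
    have Bc: "B \<in> carrier_mat k k" and dB: "det B \<noteq> 0"
      and b1: "\<And>i j. i < k \<Longrightarrow> j < k \<Longrightarrow> blk lt j < blk lt i \<Longrightarrow> B $$ (i, j) = 0"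
      and b2: "\<And>i j. i < k \<Longrightarrow> j < k \<Longrightarrow> blk mu' i < blk mu' j \<Longrightarrow> B $$ (i, j) = 0"
      using B unfolding Bs_iff by blast+
    have Cc: "C \<in> carrier_mat a k" using C unfolding Cs_def by blast
    have Dc: "D \<in> carrier_mat a a" and dD: "det D \<noteq> 0" using D unfolding Ds_iff by blast+
    have Ac: "A \<in> carrier_mat n n" using AE four_block_carrier_mat[OF Bc Dc] nka unfolding \<psi>_def
      by simp
    have "det A = det B * det D"
      using AE det_four_block_mat_upper_right_zero[OF Bc refl Cc Dc] unfolding \<psi>_def by simp
    then have dA: "det A \<noteq> 0" using dB dD by simp
    have ent: "A $$ (i, j) = (if i < k then if j < k then B $$ (i,j) else 0 else if j < k then C $$ (i-k,j) else D $$ (i-k,j-k))"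
      if "i < n" "j < n" for i j
      using four_entry[OF Bc Cc Dc, of i j] that nka AE unfolding \<psi>_def by simp
    have c1: "A $$ (i, j) = 0" if ij: "i < n" "j < n" "blk la j < blk la i" for i j
    proof -
      consider "i < k" "j < k" | "i < k" "\<not> j < k" | "\<not> i < k" "j < k" | "\<not> i < k" "\<not> j < k" by blast
      then show ?thesis
      proof cases
        case 1 then show ?thesis using ent[OF ij(1,2)] b1[of i j] G1[of i] G1[of j] ij by simp
      next
        case 2 then show ?thesis using ent[OF ij(1,2)] by auto
      next
        case 3
        have "j < n - L"
        proof (rule ccontr)
          assume "\<not> j < n - L"
          then show False using L4[of i] L4[of j] ij 3 kge by auto
        qed
        then show ?thesis using ent[OF ij(1,2)] C 3 ij nka unfolding Cs_def by auto
      next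
        case 4 then show ?thesis using L4[of i] L4[of j] ij kge by auto
      qed
    qed
    have c2: "A $$ (i, j) = 0" if ij: "i < n" "j < n" "blk mu i < blk mu j" for i j
    proof -
      consider "i < k" "j < k" | "i < k" "\<not> j < k" | "\<not> i < k" by blast
      then show ?thesis
      proof cases
        case 1 then show ?thesis using ent[OF ij(1,2)] b2[of i j] M1(1)[of i] M1(1)[of j] ij by simp
      next
        case 2 then show ?thesis using ent[OF ij(1,2)] by auto
      next
        case 3
        have "blk mu j \<le> length mu'"
          using M1[of j] M2[of j] ij by (cases "j < k") auto
        then show ?thesis using M2[of i] 3 ij by auto
      qed
    qed
    show "A \<in> parabolic_mix la mu" using A_iff Ac dA c1 c2 by blast
  qed
  have inj: "inj_on \<psi> (Bs \<times> Cs \<times> Ds)"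
  proof (rule inj_onI)
    fix x y assume x: "x \<in> Bs \<times> Cs \<times> Ds" and y: "y \<in> Bs \<times> Cs \<times> Ds" and eq: "\<psi> x = \<psi> y"
    obtain B C D where xe: "x = (B, C, D)" and B: "B \<in> Bs" and C: "C \<in> Cs" and D: "D \<in> Ds" using x by auto
    obtain B' C' D' where ye: "y = (B', C', D')" and B': "B' \<in> Bs" and C': "C' \<in> Cs" and D': "D' \<in> Ds" using y by auto
    have Bc: "B \<in> carrier_mat k k" and Cc: "C \<in> carrier_mat a k" and Dc: "D \<in> carrier_mat a a"
      using B C D unfolding Bs_iff Ds_iff Cs_def by blast+
    have Bc': "B' \<in> carrier_mat k k" and Cc': "C' \<in> carrier_mat a k" and Dc': "D' \<in> carrier_mat a a"
      using B' C' D' unfolding Bs_iff Ds_iff Cs_def by blast+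
    have e: "four_block_mat B (0\<^sub>m k a) C D $$ (i,j) = four_block_mat B' (0\<^sub>m k a) C' D' $$ (i,j)" for i j
      using eq xe ye unfolding \<psi>_def by simp
    have "B = B'"
    proof (rule eq_matI)
      fix i j assume "i < dim_row B'" "j < dim_col B'"
      then show "B $$ (i, j) = B' $$ (i, j)"
        using e[of i j] four_entry[OF Bc Cc Dc, of i j] four_entry[OF Bc' Cc' Dc', of i j] Bc' by auto
    qed (use Bc Bc' in auto)
    moreover have "C = C'"
    proof (rule eq_matI)
      fix i j assume "i < dim_row C'" "j < dim_col C'"
      then show "C $$ (i, j) = C' $$ (i, j)"
        using e[of "k+i" j] four_entry[OF Bc Cc Dc, of "k+i" j] four_entry[OF Bc' Cc' Dc', of "k+i" j] Cc' by auto
    qed (use Cc Cc' in auto)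
    moreover have "D = D'"
    proof (rule eq_matI)
      fix i j assume "i < dim_row D'" "j < dim_col D'"
      then show "D $$ (i, j) = D' $$ (i, j)"
        using e[of "k+i" "k+j"] four_entry[OF Bc Cc Dc, of "k+i" "k+j"] four_entry[OF Bc' Cc' Dc', of "k+i" "k+j"] Dc' by auto
    qed (use Dc Dc' in auto)
    ultimately show "x = y" using xe ye by simp
  qed
  have "card (parabolic_mix la mu) = card Bs * (card Cs * card Ds)"
    using img card_image[OF inj] by (simp add: card_cartesian_product)
  moreover have "card Cs = 2 ^ (a * (L - a))"
    unfolding Cs_def using card_Cs[OF kge, of a] aL Ln unfolding k_def by simp
  ultimately show ?thesis unfolding Bs_def Ds_def lt_def a_def L_def mu'_def by simp
qed

end
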